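(* Let $\Phi$ be a rooted triple formula all of whose clauses are tame. If the graph $F_\Phi$ is connected, then $\Phi$ is unsatisfiable.
   Context: Rooted triple formula: conjunction of clauses, each a disjunction of literals $xy|z$, with the convention that no literal has the form $xx|y$, $xy|x$ or $xy|y$. Satisfiable: there is a rooted binary tree $T$ (root has two neighbours, every other vertex three or one) and a map $\alpha$ from variables to leaves of $T$ such that each clause contains a literal $xy|z$ with $\alpha(x),\alpha(y),\alpha(z)$ pairwise distinct and $\mathrm{yca}(\alpha(x),\alpha(y))$ strictly below $\mathrm{yca}(\alpha(x),\alpha(z))$ (yca = common ancestor farthest from the root). A clause is trivial if it is satisfied by every injective map of its variables into the leaves of every rooted binary tree. A clause $x_1y_1|z_1\vee\dots\vee x_py_p|z_p$ is tame if it is trivial or $\{x_i,y_i\}=\{x_j,y_j\}$ for all $i,j$. For $\Phi$ with tame clauses, $F_\Phi$ is the graph on the variables of $\Phi$ with an edge $\{x,y\}$ iff $\Phi$ contains a clause $xy|z_1\vee\dots\vee xy|z_p$ with $p\ge1$. *)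

theory Defs
  imports Main "HOL-Library.Sublist"
begin

(* Rooted binary trees (shapes). A vertex is addressed by its path from the root
   (False = left child, True = right child). *)
datatype rtree = Leaf | Node rtree rtree

(* Rooted binary tree in the sense of the paper: root has two neighbours (so it is
   an internal node), every internal non-root vertex has 3 neighbours (parent + 2
   children), leaves have 1. *)
definition rooted_binary :: "rtree \<Rightarrow> bool" where
  "rooted_binary T \<longleftrightarrow> T \<noteq> Leaf"

fun leaves :: "rtree \<Rightarrow> bool list set" where
  "leaves Leaf = {[]}"
| "leaves (Node l r) = Cons False ` leaves l \<union> Cons True ` leaves r"

(* youngest common ancestor of two vertices = longest common prefix of their paths *)
definition yca :: "bool list \<Rightarrow> bool list \<Rightarrow> bool list" where
  "yca p q = longest_common_prefix p q"

(* a literal xy|z is the triple (x,y,z); a clause is a disjunction (list) of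
   literals; a formula is a conjunction (list) of clauses *)
type_synonym 'v literal = "'v \<times> 'v \<times> 'v"
type_synonym 'v clause = "'v literal list"
type_synonym 'v formula = "'v clause list"

definition wf_literal :: "'v literal \<Rightarrow> bool" where
  "wf_literal l = (case l of (x, y, z) \<Rightarrow> x \<noteq> y \<and> z \<noteq> x \<and> z \<noteq> y)"

definition wf_formula :: "'v formula \<Rightarrow> bool" where
  "wf_formula \<Phi> \<longleftrightarrow> (\<forall>C \<in> set \<Phi>. \<forall>l \<in> set C. wf_literal l)"

definition lit_vars :: "'v literal \<Rightarrow> 'v set" where
  "lit_vars l = (case l of (x, y, z) \<Rightarrow> {x, y, z})"

definition clause_vars :: "'v clause \<Rightarrow> 'v set" where
  "clause_vars C = (\<Union>l \<in> set C. lit_vars l)"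

definition formula_vars :: "'v formula \<Rightarrow> 'v set" where
  "formula_vars \<Phi> = (\<Union>C \<in> set \<Phi>. clause_vars C)"

definition sat_literal :: "('v \<Rightarrow> bool list) \<Rightarrow> 'v literal \<Rightarrow> bool" where
  "sat_literal \<alpha> l = (case l of (x, y, z) \<Rightarrow>
     \<alpha> x \<noteq> \<alpha> y \<and> \<alpha> x \<noteq> \<alpha> z \<and> \<alpha> y \<noteq> \<alpha> z \<and>
     strict_prefix (yca (\<alpha> x) (\<alpha> z)) (yca (\<alpha> x) (\<alpha> y)))"

definition sat_clause :: "('v \<Rightarrow> bool list) \<Rightarrow> 'v clause \<Rightarrow> bool" where
  "sat_clause \<alpha> C \<longleftrightarrow> (\<exists>l \<in> set C. sat_literal \<alpha> l)"

definition satisfiable :: "'v formula \<Rightarrow> bool" where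
  "satisfiable \<Phi> \<longleftrightarrow> (\<exists>T \<alpha>. rooted_binary T \<and>
      (\<forall>x \<in> formula_vars \<Phi>. \<alpha> x \<in> leaves T) \<and>
      (\<forall>C \<in> set \<Phi>. sat_clause \<alpha> C))"

definition trivial_clause :: "'v clause \<Rightarrow> bool" where
  "trivial_clause C \<longleftrightarrow> (\<forall>T \<alpha>. rooted_binary T \<longrightarrow>
      inj_on \<alpha> (clause_vars C) \<longrightarrow> \<alpha> ` clause_vars C \<subseteq> leaves T \<longrightarrow>
      sat_clause \<alpha> C)"

definition tame_clause :: "'v clause \<Rightarrow> bool" where
  "tame_clause C \<longleftrightarrow> trivial_clause C \<or>
     (\<forall>(x, y, z) \<in> set C. \<forall>(x', y', z') \<in> set C. {x, y} = {x', y'})"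

definition F_edges :: "'v formula \<Rightarrow> ('v \<times> 'v) set" where
  "F_edges \<Phi> = {(x, y). \<exists>C \<in> set \<Phi>. C \<noteq> [] \<and>
      (\<forall>(a, b, c) \<in> set C. {a, b} = {x, y})}"

(* connectedness of F_Phi (a connected graph has at least one vertex) *)
definition F_connected :: "'v formula \<Rightarrow> bool" where
  "F_connected \<Phi> \<longleftrightarrow> formula_vars \<Phi> \<noteq> {} \<and>
     (\<forall>u \<in> formula_vars \<Phi>. \<forall>v \<in> formula_vars \<Phi>. (u, v) \<in> (F_edges \<Phi>)\<^sup>*)"

end

theory Submission
  imports Defs
begin

lemma lcp_nonempty:
  "longest_common_prefix p q \<noteq> [] \<Longrightarrow> p \<noteq> [] \<and> q \<noteq> [] \<and> hd p = hd q"
  by (cases p; cases q) (auto split: if_splits)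

lemma sat_lit_tl:
  assumes "sat_literal \<alpha> (x,y,z)" "\<alpha> x \<noteq> []" "\<alpha> y \<noteq> []" "\<alpha> z \<noteq> []"
    "hd (\<alpha> x) = h" "hd (\<alpha> y) = h" "hd (\<alpha> z) = h"
  shows "sat_literal (tl \<circ> \<alpha>) (x,y,z)"
proof -
  obtain a where a: "\<alpha> x = h # a" using assms by (cases "\<alpha> x") auto
  obtain b where b: "\<alpha> y = h # b" using assms by (cases "\<alpha> y") auto
  obtain c where c: "\<alpha> z = h # c" using assms by (cases "\<alpha> z") auto
  show ?thesis using assms(1) a b c
    by (auto simp: sat_literal_def yca_def strict_prefix_def)
qed

lemma main_aux:
  assumes conn: "F_connected \<Phi>"
  shows "(\<forall>x \<in> formula_vars \<Phi>. \<alpha> x \<in> leaves T) \<Longrightarrow> (\<forall>C \<in> set \<Phi>. sat_clause \<alpha> C) \<Longrightarrow> False"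
proof (induction T arbitrary: \<alpha>)
  case Leaf
  obtain v where v: "v \<in> formula_vars \<Phi>" using conn by (auto simp: F_connected_def)
  then obtain C l where C: "C \<in> set \<Phi>" "l \<in> set C" "v \<in> lit_vars l"
    by (auto simp: formula_vars_def clause_vars_def)
  obtain l' where l': "l' \<in> set C" "sat_literal \<alpha> l'" using Leaf.prems(2) C by (auto simp: sat_clause_def)
  obtain a b c where abc: "l' = (a,b,c)" by (cases l') auto
  have "a \<in> formula_vars \<Phi>" "b \<in> formula_vars \<Phi>"
    using C l' abc by (auto simp: formula_vars_def clause_vars_def lit_vars_def)
  then show False using Leaf.prems(1) l' abc by (auto simp: sat_literal_def)
next
  case (Node l r)
  let ?V = "formula_vars \<Phi>"
  have ne: "\<And>x. x \<in> ?V \<Longrightarrow> \<alpha> x \<noteq> []" using Node.prems(1) by auto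
  obtain v where v: "v \<in> ?V" using conn by (auto simp: F_connected_def)
  have edge: "hd (\<alpha> x) = hd (\<alpha> y)" if e: "(x,y) \<in> F_edges \<Phi>" for x y
  proof -
    obtain C where C: "C \<in> set \<Phi>" "C \<noteq> []" "\<forall>(a, b, c) \<in> set C. {a, b} = {x, y}"
      using e by (auto simp: F_edges_def)
    obtain l' where l': "l' \<in> set C" "sat_literal \<alpha> l'" using Node.prems(2) C by (auto simp: sat_clause_def)
    obtain a b c where abc: "l' = (a,b,c)" by (cases l') auto
    have "yca (\<alpha> a) (\<alpha> b) \<noteq> []" using l' abc by (auto simp: sat_literal_def strict_prefix_def)
    then have "hd (\<alpha> a) = hd (\<alpha> b)" using lcp_nonempty by (auto simp: yca_def)
    moreover have "{a,b} = {x,y}" using C l' abc by auto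
    ultimately show ?thesis by (auto simp: doubleton_eq_iff)
  qed
  have hd: "hd (\<alpha> u) = hd (\<alpha> v)" if "u \<in> ?V" for u
  proof -
    have "(v,u) \<in> (F_edges \<Phi>)\<^sup>*" using conn v that by (auto simp: F_connected_def)
    then show ?thesis by induction (auto dest: edge)
  qed
  define h where "h = hd (\<alpha> v)"
  define T' where "T' = (if h then r else l)"
  have IH: False if "(\<forall>x \<in> ?V. (tl \<circ> \<alpha>) x \<in> leaves T')" "(\<forall>C \<in> set \<Phi>. sat_clause (tl \<circ> \<alpha>) C)"
  proof (cases h)
    case True then show ?thesis using Node.IH(2)[of "tl \<circ> \<alpha>"] that unfolding T'_def by (simp add: comp_def)
  next
    case False then show ?thesis using Node.IH(1)[of "tl \<circ> \<alpha>"] that unfolding T'_def by (simp add: comp_def)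
  qed
  show False
  proof (rule IH)
    show "\<forall>x \<in> ?V. (tl \<circ> \<alpha>) x \<in> leaves T'"
    proof
      fix x assume x: "x \<in> ?V"
      then have "hd (\<alpha> x) = h" using hd h_def by auto
      then show "(tl \<circ> \<alpha>) x \<in> leaves T'" using Node.prems(1) x unfolding T'_def by auto
    qed
    show "\<forall>C \<in> set \<Phi>. sat_clause (tl \<circ> \<alpha>) C"
    proof
      fix C assume C: "C \<in> set \<Phi>"
      obtain l' where l': "l' \<in> set C" "sat_literal \<alpha> l'" using Node.prems(2) C by (auto simp: sat_clause_def)
      obtain a b c where abc: "l' = (a,b,c)" by (cases l') auto
      have V: "a \<in> ?V" "b \<in> ?V" "c \<in> ?V"
        using C l' abc by (auto simp: formula_vars_def clause_vars_def lit_vars_def)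
      have "sat_literal (tl \<circ> \<alpha>) (a,b,c)"
        by (rule sat_lit_tl[where h=h]) (use l' abc V ne hd h_def in auto)
      then show "sat_clause (tl \<circ> \<alpha>) C" using l' abc by (auto simp: sat_clause_def)
    qed
  qed
qed

theorem mainTheorem7:
  fixes \<Phi> :: "'v formula"
  assumes "wf_formula \<Phi>"
    and "\<forall>C \<in> set \<Phi>. tame_clause C"
    and "F_connected \<Phi>"
  shows "\<not> satisfiable \<Phi>"
  using main_aux[OF assms(3)] unfolding satisfiable_def by blast

end
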